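(* Fix a non-negative integer $t$ and consider finite rooted trees $T$ such that every root-to-leaf path $v_1,v_2,\ldots,v_q$ satisfies $\sum_{i=1}^{q} c(v_i) \le t$, where $c(v)$ denotes the number of children of node $v$. The maximum number of leaves of such a tree is $l(t)$, where $l(1)=1$ and for $t\ne 1$: $l(t)=3^i$ if $t=3i$; $l(t)=4\cdot 3^{i-1}$ if $t=3i+1$; $l(t)=2\cdot 3^i$ if $t=3i+2$ (with $i$ a non-negative integer). *)

theory Defs
  imports Main
begin

datatype tree = Node "tree list"

fun children_count :: "tree \<Rightarrow> nat" where
  "children_count (Node ts) = length ts"

inductive root_leaf_path :: "tree \<Rightarrow> tree list \<Rightarrow> bool" where
  leaf: "root_leaf_path (Node []) [Node []]"
| step: "s \<in> set ts \<Longrightarrow> root_leaf_path s p \<Longrightarrow> root_leaf_path (Node ts) (Node ts # p)"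

fun leaves :: "tree \<Rightarrow> nat" where
  "leaves (Node ts) = (if ts = [] then 1 else sum_list (map leaves ts))"

definition admissible :: "nat \<Rightarrow> tree \<Rightarrow> bool" where
  "admissible t T \<longleftrightarrow> (\<forall>p. root_leaf_path T p \<longrightarrow> (\<Sum>v\<leftarrow>p. children_count v) \<le> t)"

definition l :: "nat \<Rightarrow> nat" where
  "l t = (if t = 1 then 1
          else if t mod 3 = 0 then 3 ^ (t div 3)
          else if t mod 3 = 1 then 4 * 3 ^ (t div 3 - 1)
          else 2 * 3 ^ (t div 3))"

end

theory Submission
  imports Defs
begin

lemma l_rec: "n \<ge> 2 \<Longrightarrow> l (n + 3) = 3 * l n"
proof -
  assume n: "n \<ge> 2"
  have m: "(n+3) mod 3 = n mod 3" and d: "(n+3) div 3 = n div 3 + 1" by auto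
  show ?thesis
  proof (cases "n mod 3 = 1")
    case True
    hence "n div 3 \<ge> 1" using n by presburger
    then obtain j where "n div 3 = Suc j" by (cases "n div 3") auto
    thus ?thesis unfolding l_def using n True m d by simp
  qed (use n m d in \<open>auto simp: l_def\<close>)
qed

lemma lv: "l 0 = 1" "l 1 = 1" "l 2 = 2" "l 3 = 3" "l 4 = 4" "l 5 = 6" "l 6 = 9" "l 7 = 12" "l 8 = 18"
  by (simp_all add: l_def)

lemma lvS: "l (Suc 0) = 1" "l (Suc (Suc 0)) = 2" "l (Suc (Suc (Suc 0))) = 3"
  by (simp_all add: l_def)

lemma key: "1 \<le> k \<Longrightarrow> k * l s \<le> l (s + k)"
proof (induction "s + k" arbitrary: s k rule: less_induct)
  case less
  show ?case
  proof (cases "s \<ge> 5")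
    case True
    then obtain s' where s': "s = s' + 3" "s' \<ge> 2" by (intro that[of "s - 3"]) auto
    have "k * l s' \<le> l (s' + k)" using less.hyps[of s' k] less.prems s' by simp
    moreover have "l (s' + k + 3) = 3 * l (s' + k)" using s' by (intro l_rec) simp
    ultimately show ?thesis using s' l_rec[of s'] by (simp add: algebra_simps)
  next
    case False
    show ?thesis
    proof (cases "k \<ge> 5")
      case True
      then obtain k' where k': "k = k' + 3" "k' \<ge> 2" by (intro that[of "k - 3"]) auto
      have "k' * l s \<le> l (s + k')" using less.hyps[of s k'] k' by simp
      moreover have "l (s + k' + 3) = 3 * l (s + k')" using k' by (intro l_rec) simp
      moreover have "k * l s \<le> 3 * (k' * l s)" using k' by simp
      ultimately have "k * l s \<le> l (s + k' + 3)" by linarith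
      thus ?thesis using k' by (simp add: algebra_simps)
    next
      case False
      with \<open>\<not> s \<ge> 5\<close> less.prems have "s \<in> {0,1,2,3,4}" "k \<in> {1,2,3,4}" by auto
      thus ?thesis by (auto simp: lv lvS)
    qed
  qed
qed

lemma path_exists: "\<exists>p. root_leaf_path T p"
proof (induction T)
  case (Node ts)
  show ?case
  proof (cases ts)
    case Nil thus ?thesis using root_leaf_path.leaf by blast
  next
    case (Cons s r)
    then obtain q where "root_leaf_path s q" using Node by auto
    thus ?thesis using Cons root_leaf_path.step[of s ts q] by auto
  qed
qed

lemma path_cases: "root_leaf_path (Node ts) p \<Longrightarrow>
  (ts = [] \<and> p = [Node []]) \<or> (\<exists>s q. s \<in> set ts \<and> root_leaf_path s q \<and> p = Node ts # q)"
  by (erule root_leaf_path.cases) auto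

lemma sum_bound: "(\<forall>x\<in>set xs. f x \<le> (c::nat)) \<Longrightarrow> sum_list (map f xs) \<le> length xs * c"
  by (induction xs) auto

lemma upper: "admissible t T \<Longrightarrow> leaves T \<le> l t"
proof (induction T arbitrary: t)
  case (Node ts)
  show ?case
  proof (cases "ts = []")
    case True
    have l0: "l 0 = 1" by (simp add: l_def)
    have "l t \<ge> 1"
    proof (cases "t = 0")
      case True thus ?thesis using l0 by simp
    next
      case False thus ?thesis using key[of t 0] l0 by simp
    qed
    thus ?thesis using True by simp
  next
    case False
    let ?k = "length ts"
    have adm: "admissible (t - ?k) s \<and> ?k \<le> t" if s: "s \<in> set ts" for s
    proof -
      have "(\<Sum>v\<leftarrow>q. children_count v) \<le> t - ?k \<and> ?k \<le> t" if q: "root_leaf_path s q" for q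
      proof -
        have "root_leaf_path (Node ts) (Node ts # q)" using root_leaf_path.step[OF s q] .
        hence "(\<Sum>v\<leftarrow>Node ts # q. children_count v) \<le> t" using Node.prems unfolding admissible_def by blast
        thus ?thesis by simp
      qed
      moreover obtain q where "root_leaf_path s q" using path_exists by blast
      ultimately show ?thesis unfolding admissible_def by blast
    qed
    have "\<forall>s\<in>set ts. leaves s \<le> l (t - ?k)" using adm Node.IH by blast
    hence "leaves (Node ts) \<le> ?k * l (t - ?k)" using False sum_bound[of ts leaves] by simp
    also have "\<dots> \<le> l (t - ?k + ?k)" using False by (intro key) (cases ts, auto)
    also have "t - ?k + ?k = t" using adm[of "hd ts"] False by simp
    finally show ?thesis .
  qed
qed

lemma adm_leaf: "admissible t (Node [])"
  unfolding admissible_def by (auto dest!: path_cases)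

lemma adm_node: "ts \<noteq> [] \<Longrightarrow> \<forall>s\<in>set ts. admissible m s \<Longrightarrow> admissible (m + length ts) (Node ts)"
  unfolding admissible_def by (fastforce dest!: path_cases)

lemma adm_mono: "admissible m T \<Longrightarrow> m \<le> t \<Longrightarrow> admissible t T"
  unfolding admissible_def by fastforce

fun opt :: "nat \<Rightarrow> tree" where
  "opt 0 = Node []"
| "opt (Suc 0) = Node [Node []]"
| "opt (Suc (Suc 0)) = Node [Node [], Node []]"
| "opt (Suc (Suc (Suc 0))) = Node [Node [], Node [], Node []]"
| "opt (Suc (Suc (Suc (Suc 0)))) = Node [Node [Node [], Node []], Node [Node [], Node []]]"
| "opt (Suc (Suc (Suc (Suc (Suc n))))) = Node (replicate 3 (opt (n + 2)))"

lemma leaves3: "leaves (Node (replicate 3 x)) = 3 * leaves x"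
  by (simp add: numeral_3_eq_3)

lemma adm3: "admissible m x \<Longrightarrow> admissible (m + 3) (Node (replicate 3 x))"
  using adm_node[of "replicate 3 x" m] by (simp add: numeral_3_eq_3)

lemma opt_ok: "admissible t (opt t) \<and> leaves (opt t) = l t"
proof (induction t rule: opt.induct)
  case (6 n)
  have e: "Suc (Suc (Suc (Suc (Suc n)))) = n + 2 + 3" by simp
  have "l (n + 2 + 3) = 3 * l (n+2)" by (rule l_rec) simp
  moreover have "admissible (n + 2 + 3) (opt (Suc (Suc (Suc (Suc (Suc n))))))"
    using 6 adm3[of "n+2" "opt (n+2)"] by simp
  moreover have "leaves (opt (Suc (Suc (Suc (Suc (Suc n)))))) = 3 * leaves (opt (n+2))"
    using leaves3 by simp
  ultimately show ?case using 6 unfolding e by simp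
next
  case 2
  have "admissible (0 + length [Node []]) (Node [Node []])" by (intro adm_node) (auto simp: adm_leaf)
  thus ?case by (simp add: lvS)
next
  case 3
  have "admissible (0 + length [Node [], Node []]) (Node [Node [], Node []])" by (intro adm_node) (auto simp: adm_leaf)
  thus ?case by (simp add: lvS)
next
  case 4
  have "admissible (0 + length [Node [], Node [], Node []]) (Node [Node [], Node [], Node []])" by (intro adm_node) (auto simp: adm_leaf)
  thus ?case by (simp add: lvS)
next
  case 5
  have x: "admissible 2 (Node [Node [], Node []])"
    using adm_node[of "[Node [], Node []]" 0] by (simp add: adm_leaf numeral_2_eq_2)
  have "admissible (2 + 2) (Node [Node [Node [], Node []], Node [Node [], Node []]])"
    using x adm_node[of "[Node [Node [], Node []], Node [Node [], Node []]]" 2] by simp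
  moreover have "l (Suc (Suc (Suc (Suc 0)))) = 4" using lv(5) by (simp add: eval_nat_numeral)
  ultimately show ?case by (simp add: eval_nat_numeral)
qed (simp add: adm_leaf lv)
theorem lemma1:
  fixes t :: nat
  shows "(\<forall>T. admissible t T \<longrightarrow> leaves T \<le> l t) \<and> (\<exists>T. admissible t T \<and> leaves T = l t)"
  using upper opt_ok by blast

end
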